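(* Let $\Sigma\subset\mathbb{C}$ be closed and let $\Omega\subset\mathbb{C}$ be a bounded, open, simply connected set containing a point $z_0\in\mathbb{C}\setminus\Sigma$. For every compact set $K\subset\Omega$ there exists a smooth map $\kappa:\Omega\setminus\{z_0\}\to\Omega\setminus\{z_0\}$ with $\kappa(z)=z$ for all $z\in\Omega$ in a neighborhood of $\partial\Omega$, such that $\kappa(\Sigma\cap\Omega)\cap K=\emptyset$.
   Context: In the paper, $\Sigma$ is the closure of the range of a symbol $p$ and $\Omega\Subset\mathbb{C}\setminus\Sigma_\infty$; only the stated properties are used. *)

theory Defs
  imports "HOL-Analysis.Analysis"
begin

text \<open>Smoothness (C-infinity) of a map of the plane, viewed as a map of real 2-space
  (complex numbers as a real normed vector space), on an open set S:
  f belongs to a family of functions, each continuous and (Frechet) differentiable on S,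
  closed under taking directional derivatives in every direction v. Equivalently, all
  iterated directional derivatives of all orders exist and are continuous.\<close>
definition smooth_on :: "complex set \<Rightarrow> (complex \<Rightarrow> complex) \<Rightarrow> bool" where
  "smooth_on S f \<longleftrightarrow>
     (\<exists>F :: (complex \<Rightarrow> complex) set. f \<in> F \<and>
        (\<forall>g\<in>F. continuous_on S g \<and>
           (\<forall>v. \<exists>h\<in>F. \<forall>x\<in>S. \<exists>D. (g has_derivative D) (at x) \<and> h x = D v)))"

end

theory Submission
  imports Defs "HOL-Complex_Analysis.Complex_Analysis" "HOL-Computational_Algebra.Polynomial"
begin


definition valid_fam :: "complex set \<Rightarrow> (complex \<Rightarrow> complex) set \<Rightarrow> bool" where
  "valid_fam S F \<longleftrightarrow> (\<forall>g\<in>F. continuous_on S g \<and>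
           (\<forall>v. \<exists>h\<in>F. \<forall>x\<in>S. \<exists>D. (g has_derivative D) (at x) \<and> h x = D v))"

lemma bex_witness:
  assumes "h \<in> F" "\<forall>x\<in>S. \<exists>D. (g has_derivative D) (at x) \<and> h x = D v"
  shows "\<exists>h\<in>F. \<forall>x\<in>S. \<exists>D. (g has_derivative D) (at x) \<and> h x = D v"
  apply (rule bexI[rotated])
  apply (rule assms(1))
  apply (rule assms(2))
  done

lemma smooth_on_fam: "smooth_on S f \<longleftrightarrow> (\<exists>F. f \<in> F \<and> valid_fam S F)"
  unfolding smooth_on_def valid_fam_def by blast

lemma smooth_onI: "f \<in> F \<Longrightarrow> valid_fam S F \<Longrightarrow> smooth_on S f"
  unfolding smooth_on_fam by (rule exI[of _ F]) simp

lemma valid_fam_SM: "valid_fam S {f. smooth_on S f}"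
  unfolding valid_fam_def
proof (intro ballI conjI allI)
  fix g v assume "g \<in> {f. smooth_on S f}"
  then obtain F where F: "g \<in> F" "valid_fam S F" unfolding smooth_on_fam by auto
  then show "continuous_on S g" unfolding valid_fam_def by auto
  from F obtain h where "h \<in> F" "\<forall>x\<in>S. \<exists>D. (g has_derivative D) (at x) \<and> h x = D v"
    unfolding valid_fam_def by blast
  moreover have "smooth_on S h" using F \<open>h \<in> F\<close> unfolding smooth_on_fam by blast
  ultimately show "\<exists>h\<in>{f. smooth_on S f}. \<forall>x\<in>S. \<exists>D. (g has_derivative D) (at x) \<and> h x = D v"
    by blast
qed

lemma smooth_onD:
  assumes "smooth_on S f"
  shows "continuous_on S f" "\<exists>h. smooth_on S h \<and> (\<forall>x\<in>S. \<exists>D. (f has_derivative D) (at x) \<and> h x = D v)"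
  using valid_fam_SM[of S] assms unfolding valid_fam_def by auto

lemma smooth_on_subset: "smooth_on S f \<Longrightarrow> T \<subseteq> S \<Longrightarrow> smooth_on T f"
  unfolding smooth_on_def by (metis continuous_on_subset subsetD)

lemma smooth_on_cong:
  assumes "smooth_on S f" "open S" "\<And>x. x \<in> S \<Longrightarrow> f x = g x"
  shows "smooth_on S g"
proof -
  have "valid_fam S (insert g {f. smooth_on S f})"
    unfolding valid_fam_def
  proof (intro ballI conjI allI)
    fix k v assume k: "k \<in> insert g {f. smooth_on S f}"
    show "continuous_on S k"
    proof (cases "k = g")
      case True
      have "continuous_on S f" using smooth_onD(1)[OF assms(1)] .
      then show ?thesis using True continuous_on_cong[of S S f g] assms(3) by simp
    next
      case False
      then show ?thesis using k smooth_onD(1) by auto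
    qed
    show "\<exists>h\<in>insert g {f. smooth_on S f}. \<forall>x\<in>S. \<exists>D. (k has_derivative D) (at x) \<and> h x = D v"
    proof (cases "k = g")
      case True
      obtain h where h: "smooth_on S h" "\<forall>x\<in>S. \<exists>D. (f has_derivative D) (at x) \<and> h x = D v"
        using smooth_onD(2)[OF assms(1)] by blast
      have "\<forall>x\<in>S. \<exists>D. (g has_derivative D) (at x) \<and> h x = D v"
      proof
        fix x assume x: "x \<in> S"
        then obtain D where "(f has_derivative D) (at x)" "h x = D v" using h(2) by blast
        then show "\<exists>D. (g has_derivative D) (at x) \<and> h x = D v"
          using has_derivative_transform_within_open[of f D x UNIV S g, OF _ assms(2) x assms(3)] by blast
      qed
      then show ?thesis using h(1) True by blast
    next
      case False
      then show ?thesis using k smooth_onD(2) by blast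
    qed
  qed
  then show ?thesis by (intro smooth_onI[of _ "insert g {f. smooth_on S f}"]) simp_all
qed

definition ReC :: "complex \<Rightarrow> complex" where "ReC u = complex_of_real (Re u)"
definition ImC :: "complex \<Rightarrow> complex" where "ImC u = complex_of_real (Im u)"

definition aff :: "complex \<Rightarrow> complex \<Rightarrow> complex \<Rightarrow> complex \<Rightarrow> complex" where
  "aff a b c u = ReC u * a + ImC u * b + c"

lemma affine_has_derivative:
  "(aff a b c has_derivative (\<lambda>u. ReC u * a + ImC u * b)) (at x)"
proof -
  have bl: "bounded_linear (\<lambda>u. ReC u * a + ImC u * b)"
    unfolding ReC_def ImC_def
    by (intro bounded_linear_add bounded_linear_compose[OF bounded_linear_mult_left]
        bounded_linear_compose[OF bounded_linear_of_real] bounded_linear_Re bounded_linear_Im)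
  have "((\<lambda>u. ReC u * a + ImC u * b + c) has_derivative (\<lambda>u. ReC u * a + ImC u * b)) (at x)"
    using has_derivative_add_const[OF bounded_linear.has_derivative[OF bl has_derivative_ident], of c]
    by simp
  moreover have "aff a b c = (\<lambda>u. ReC u * a + ImC u * b + c)" by (simp add: aff_def fun_eq_iff)
  ultimately show ?thesis by simp
qed

lemma smooth_aff: "smooth_on S (aff a b c)"
proof -
  have "valid_fam S (range (\<lambda>(a,b,c). aff a b c))"
    unfolding valid_fam_def
  proof (intro ballI conjI allI)
    fix g v assume "g \<in> range (\<lambda>(a,b,c). aff a b c)"
    then obtain a b c where g: "g = aff a b c" by auto
    have "continuous_on S (\<lambda>u. ReC u * a + ImC u * b + c)"
      unfolding ReC_def ImC_def by (intro continuous_intros)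
    moreover have "aff a b c = (\<lambda>u. ReC u * a + ImC u * b + c)" by (simp add: aff_def fun_eq_iff)
    ultimately show "continuous_on S g" unfolding g by simp
    define k where "k = ReC v * a + ImC v * b"
    have hL: "aff 0 0 k \<in> range (\<lambda>(a,b,c). aff a b c)" by (rule range_eqI[of _ _ "(0,0,k)"]) simp
    have hD: "\<forall>x\<in>S. \<exists>D. (g has_derivative D) (at x) \<and> aff 0 0 k x = D v"
    proof
      fix x
      have "aff 0 0 k x = ReC v * a + ImC v * b" by (simp add: aff_def k_def)
      then show "\<exists>D. (g has_derivative D) (at x) \<and> aff 0 0 k x = D v"
        unfolding g using affine_has_derivative[of a b c x] by blast
    qed
    show "\<exists>h\<in>range (\<lambda>(a,b,c). aff a b c). \<forall>x\<in>S. \<exists>D. (g has_derivative D) (at x) \<and> h x = D v"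
      by (rule bex_witness[OF hL hD])
  qed
  moreover have "aff a b c \<in> range (\<lambda>(a,b,c). aff a b c)" by (rule range_eqI[of _ _ "(a,b,c)"]) simp
  ultimately show ?thesis by (intro smooth_onI)
qed

lemma smooth_affine: "smooth_on S (\<lambda>u. ReC u * a + ImC u * b + c)"
proof -
  have "aff a b c = (\<lambda>u. ReC u * a + ImC u * b + c)" by (simp add: aff_def fun_eq_iff)
  then show ?thesis using smooth_aff[of S a b c] by simp
qed

lemma smooth_const: "smooth_on S (\<lambda>u. c)"
  using smooth_affine[of S 0 0 c] by simp
lemma smooth_ReC: "smooth_on S ReC"
  using smooth_affine[of S 1 0 0] by simp
lemma smooth_ImC: "smooth_on S ImC"
  using smooth_affine[of S 0 1 0] by simp

lemma smooth_holomorphic: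
  assumes "f holomorphic_on T" "open T"
  shows "smooth_on T f"
proof -
  have "valid_fam T {g. g holomorphic_on T}"
    unfolding valid_fam_def
  proof (intro ballI conjI allI)
    fix g v assume g: "g \<in> {g. g holomorphic_on T}"
    have gh: "g holomorphic_on T" using g by simp
    show "continuous_on T g" by (rule holomorphic_on_imp_continuous_on[OF gh])
    have hh: "(\<lambda>x. deriv g x * v) holomorphic_on T"
      by (rule holomorphic_on_mult[OF holomorphic_deriv[OF gh assms(2)] holomorphic_on_const])
    have hD: "\<forall>x\<in>T. \<exists>D. (g has_derivative D) (at x) \<and> deriv g x * v = D v"
    proof
      fix x assume "x \<in> T"
      then have "(g has_field_derivative deriv g x) (at x)"
        by (rule holomorphic_derivI[OF gh assms(2)])
      then have "(g has_derivative (\<lambda>u. deriv g x * u)) (at x)"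
        unfolding has_field_derivative_def .
      then show "\<exists>D. (g has_derivative D) (at x) \<and> deriv g x * v = D v"
        by (intro exI[of _ "\<lambda>u. deriv g x * u"] conjI) simp_all
    qed
    have hL: "(\<lambda>x. deriv g x * v) \<in> {g. g holomorphic_on T}" using hh by simp
    show "\<exists>h\<in>{g. g holomorphic_on T}. \<forall>x\<in>T. \<exists>D. (g has_derivative D) (at x) \<and> h x = D v"
      by (rule bex_witness[OF hL hD])
  qed
  moreover have "f \<in> {g. g holomorphic_on T}" using assms(1) by simp
  ultimately show ?thesis by (intro smooth_onI)
qed



inductive_set CL :: "complex set \<Rightarrow> (complex \<Rightarrow> complex) set" for S where
  base: "smooth_on S f \<Longrightarrow> f \<in> CL S"
| add: "f \<in> CL S \<Longrightarrow> g \<in> CL S \<Longrightarrow> (\<lambda>x. f x + g x) \<in> CL S"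
| mult: "f \<in> CL S \<Longrightarrow> g \<in> CL S \<Longrightarrow> (\<lambda>x. f x * g x) \<in> CL S"
| comp: "f \<in> CL S \<Longrightarrow> smooth_on T g \<Longrightarrow> f ` S \<subseteq> T \<Longrightarrow> (\<lambda>x. g (f x)) \<in> CL S"

lemma linear_decomp:
  assumes "bounded_linear D"
  shows "D u = ReC u * D 1 + ImC u * D \<i>"
proof -
  have "u = Re u *\<^sub>R 1 + Im u *\<^sub>R \<i>" by (simp add: complex_eq_iff)
  then have "D u = D (Re u *\<^sub>R 1 + Im u *\<^sub>R \<i>)" by simp
  also have "\<dots> = Re u *\<^sub>R D 1 + Im u *\<^sub>R D \<i>"
    using assms by (simp add: bounded_linear.linear linear_add linear_scale)
  finally show ?thesis by (simp add: ReC_def ImC_def scaleR_conv_of_real)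
qed

lemma CL_valid: "valid_fam S (CL S)"
  unfolding valid_fam_def
proof
  fix f assume "f \<in> CL S"
  then show "continuous_on S f \<and> (\<forall>v. \<exists>h\<in>CL S. \<forall>x\<in>S. \<exists>D. (f has_derivative D) (at x) \<and> h x = D v)"
  proof (induction rule: CL.induct)
    case (base f)
    show ?case
    proof (intro conjI allI)
      show "continuous_on S f" using smooth_onD(1)[OF base] .
      fix v
      obtain h where "smooth_on S h" "\<forall>x\<in>S. \<exists>D. (f has_derivative D) (at x) \<and> h x = D v"
        using smooth_onD(2)[OF base] by blast
      then show "\<exists>h\<in>CL S. \<forall>x\<in>S. \<exists>D. (f has_derivative D) (at x) \<and> h x = D v"
        by (intro bex_witness[of h] CL.base) auto
    qed
  next
    case (add f g)
    show ?case
    proof (intro conjI allI)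
      show "continuous_on S (\<lambda>x. f x + g x)" using add by (intro continuous_intros) auto
      fix v
      obtain hf where hf: "hf \<in> CL S" "\<forall>x\<in>S. \<exists>D. (f has_derivative D) (at x) \<and> hf x = D v"
        using add by blast
      obtain hg where hg: "hg \<in> CL S" "\<forall>x\<in>S. \<exists>D. (g has_derivative D) (at x) \<and> hg x = D v"
        using add by blast
      have "\<forall>x\<in>S. \<exists>D. ((\<lambda>x. f x + g x) has_derivative D) (at x) \<and> hf x + hg x = D v"
      proof
        fix x assume "x \<in> S"
        then obtain D1 D2 where "(f has_derivative D1) (at x)" "hf x = D1 v"
          "(g has_derivative D2) (at x)" "hg x = D2 v" using hf hg by blast
        then show "\<exists>D. ((\<lambda>x. f x + g x) has_derivative D) (at x) \<and> hf x + hg x = D v"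
          by (intro exI[of _ "\<lambda>u. D1 u + D2 u"]) (auto intro: has_derivative_add)
      qed
      then show "\<exists>h\<in>CL S. \<forall>x\<in>S. \<exists>D. ((\<lambda>x. f x + g x) has_derivative D) (at x) \<and> h x = D v"
        by (rule bex_witness[OF CL.add[OF hf(1) hg(1)]])
    qed
  next
    case (mult f g)
    show ?case
    proof (intro conjI allI)
      show "continuous_on S (\<lambda>x. f x * g x)" using mult by (intro continuous_intros) auto
      fix v
      obtain hf where hf: "hf \<in> CL S" "\<forall>x\<in>S. \<exists>D. (f has_derivative D) (at x) \<and> hf x = D v"
        using mult by blast
      obtain hg where hg: "hg \<in> CL S" "\<forall>x\<in>S. \<exists>D. (g has_derivative D) (at x) \<and> hg x = D v"
        using mult by blast
      have W: "\<forall>x\<in>S. \<exists>D. ((\<lambda>x. f x * g x) has_derivative D) (at x) \<and> f x * hg x + hf x * g x = D v"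
      proof
        fix x assume "x \<in> S"
        then obtain D1 D2 where "(f has_derivative D1) (at x)" "hf x = D1 v"
          "(g has_derivative D2) (at x)" "hg x = D2 v" using hf hg by blast
        then show "\<exists>D. ((\<lambda>x. f x * g x) has_derivative D) (at x) \<and> f x * hg x + hf x * g x = D v"
          by (intro exI[of _ "\<lambda>u. f x * D2 u + D1 u * g x"]) (auto intro: has_derivative_mult)
      qed
      have M: "(\<lambda>x. f x * hg x + hf x * g x) \<in> CL S"
        using mult hf hg by (intro CL.add CL.mult) auto
      show "\<exists>h\<in>CL S. \<forall>x\<in>S. \<exists>D. ((\<lambda>x. f x * g x) has_derivative D) (at x) \<and> h x = D v"
        by (rule bex_witness[OF M W])
    qed
  next
    case (comp f T g)
    show ?case
    proof (intro conjI allI)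
      show "continuous_on S (\<lambda>x. g (f x))"
        using comp continuous_on_compose2[OF smooth_onD(1)[OF comp(2)], of S f] by auto
      fix v
      obtain hf where hf: "hf \<in> CL S" "\<forall>x\<in>S. \<exists>D. (f has_derivative D) (at x) \<and> hf x = D v"
        using comp by blast
      obtain g1 where g1: "smooth_on T g1" "\<forall>y\<in>T. \<exists>D. (g has_derivative D) (at y) \<and> g1 y = D 1"
        using smooth_onD(2)[OF comp(2)] by blast
      obtain gi where gi: "smooth_on T gi" "\<forall>y\<in>T. \<exists>D. (g has_derivative D) (at y) \<and> gi y = D \<i>"
        using smooth_onD(2)[OF comp(2)] by blast
      have W: "\<forall>x\<in>S. \<exists>D. ((\<lambda>x. g (f x)) has_derivative D) (at x) \<and>
          ReC (hf x) * g1 (f x) + ImC (hf x) * gi (f x) = D v"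
      proof
        fix x assume x: "x \<in> S"
        then have fx: "f x \<in> T" using comp by auto
        obtain Df where Df: "(f has_derivative Df) (at x)" "hf x = Df v" using hf x by blast
        obtain D1 where D1: "(g has_derivative D1) (at (f x))" "g1 (f x) = D1 1" using g1 fx by blast
        obtain Di where Di: "(g has_derivative Di) (at (f x))" "gi (f x) = Di \<i>" using gi fx by blast
        have "Di = D1" using has_derivative_unique[OF Di(1) D1(1)] .
        have "D1 (Df v) = ReC (hf x) * g1 (f x) + ImC (hf x) * gi (f x)"
          using linear_decomp[OF has_derivative_bounded_linear[OF D1(1)], of "Df v"]
            Df(2) D1(2) Di(2) \<open>Di = D1\<close> by simp
        moreover have "((\<lambda>x. g (f x)) has_derivative (\<lambda>u. D1 (Df u))) (at x)"
          using has_derivative_compose[OF Df(1) D1(1)] .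
        ultimately show "\<exists>D. ((\<lambda>x. g (f x)) has_derivative D) (at x) \<and>
          ReC (hf x) * g1 (f x) + ImC (hf x) * gi (f x) = D v" by metis
      qed
      have M: "(\<lambda>x. ReC (hf x) * g1 (f x) + ImC (hf x) * gi (f x)) \<in> CL S"
      proof (intro CL.add CL.mult)
        show "(\<lambda>x. ReC (hf x)) \<in> CL S" by (rule CL.comp[OF hf(1) smooth_ReC[of UNIV]]) auto
        show "(\<lambda>x. ImC (hf x)) \<in> CL S" by (rule CL.comp[OF hf(1) smooth_ImC[of UNIV]]) auto
        show "(\<lambda>x. g1 (f x)) \<in> CL S" by (rule CL.comp[OF comp(1) g1(1) comp(3)])
        show "(\<lambda>x. gi (f x)) \<in> CL S" by (rule CL.comp[OF comp(1) gi(1) comp(3)])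
      qed
      show "\<exists>h\<in>CL S. \<forall>x\<in>S. \<exists>D. ((\<lambda>x. g (f x)) has_derivative D) (at x) \<and> h x = D v"
        by (rule bex_witness[OF M W])
    qed
  qed
qed

lemma CL_smooth: "f \<in> CL S \<Longrightarrow> smooth_on S f"
  by (rule smooth_onI[OF _ CL_valid])

lemma smooth_add: assumes "smooth_on S f" "smooth_on S g" shows "smooth_on S (\<lambda>x. f x + g x)"
  by (rule CL_smooth[OF CL.add[OF CL.base[OF assms(1)] CL.base[OF assms(2)]]])
lemma smooth_mult: assumes "smooth_on S f" "smooth_on S g" shows "smooth_on S (\<lambda>x. f x * g x)"
  by (rule CL_smooth[OF CL.mult[OF CL.base[OF assms(1)] CL.base[OF assms(2)]]])
lemma smooth_comp: assumes "smooth_on S f" "smooth_on T g" "f ` S \<subseteq> T" shows "smooth_on S (\<lambda>x. g (f x))"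
  by (rule CL_smooth[OF CL.comp[OF CL.base[OF assms(1)] assms(2) assms(3)]])



definition bp :: "real poly \<Rightarrow> real \<Rightarrow> real" where
  "bp p x = (if x \<le> 0 then 0 else poly p (1/x) * exp (- (1/x)))"

definition nextp :: "real poly \<Rightarrow> real poly" where
  "nextp p = [:0,0,1:] * (p - pderiv p)"

lemma polyexp_lim: "((\<lambda>y. poly (p::real poly) y * exp (- y)) \<longlongrightarrow> 0) at_top"
proof -
  have eq: "poly p y * exp (- y) = (\<Sum>i\<le>degree p. coeff p i * (y ^ i / exp y))" for y :: real
  proof -
    have "poly p y * exp (- y) = poly p y / exp y" by (simp add: exp_minus field_simps)
    also have "\<dots> = (\<Sum>i\<le>degree p. coeff p i * y ^ i) / exp y" by (simp add: poly_altdef)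
    also have "\<dots> = (\<Sum>i\<le>degree p. coeff p i * (y ^ i / exp y))" by (simp add: sum_divide_distrib)
    finally show ?thesis .
  qed
  have "((\<lambda>y. \<Sum>i\<le>degree p. coeff p i * (y ^ i / exp y)) \<longlongrightarrow> 0) at_top"
    by (intro tendsto_null_sum tendsto_mult_right_zero tendsto_power_div_exp_0)
  then show ?thesis by (simp add: eq)
qed

lemma bp_deriv0: "(bp p has_real_derivative 0) (at 0)"
proof -
  have L: "((\<lambda>y. (bp p y - bp p 0) / (y - 0)) \<longlongrightarrow> 0) (at_left 0)"
  proof (rule tendsto_eventually)
    show "\<forall>\<^sub>F y in at_left 0. (bp p y - bp p 0) / (y - 0) = 0"
      using eventually_at_left_real[of "-1" "0::real"]
      by (auto elim!: eventually_mono simp: bp_def)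
  qed
  have R: "((\<lambda>y. (bp p y - bp p 0) / (y - 0)) \<longlongrightarrow> 0) (at_right 0)"
    unfolding filterlim_at_right_to_top
  proof -
    have T: "((\<lambda>y. poly ([:0,1:] * p) y * exp (- y)) \<longlongrightarrow> 0) at_top" by (rule polyexp_lim)
    have E: "\<forall>\<^sub>F y in at_top. poly ([:0,1:] * p) y * exp (- y) =
        (bp p (inverse y) - bp p 0) / (inverse y - 0)"
      by (rule eventually_mono[OF eventually_gt_at_top[of "0::real"]]) (auto simp: bp_def field_simps)
    show "((\<lambda>y. (bp p (inverse y) - bp p 0) / (inverse y - 0)) \<longlongrightarrow> 0) at_top"
      by (rule Lim_transform_eventually[OF T E])
  qed
  show ?thesis unfolding has_field_derivative_iff
    by (rule filterlim_split_at[OF L R])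
qed

lemma bp_deriv_pos:
  assumes "x > 0"
  shows "(bp p has_real_derivative bp (nextp p) x) (at x)"
proof -
  have d: "((\<lambda>x. poly p (1/x) * exp (- (1/x))) has_real_derivative
     poly (pderiv p) (1/x) * (- 1 / x^2) * exp (- (1/x)) + poly p (1/x) * (exp (- (1/x)) * (1 / x^2))) (at x)"
    using assms
    by (auto intro!: derivative_eq_intros DERIV_chain2[OF poly_DERIV] simp: power2_eq_square field_simps)
  have "poly (pderiv p) (1/x) * (- 1 / x^2) * exp (- (1/x)) + poly p (1/x) * (exp (- (1/x)) * (1 / x^2))
      = bp (nextp p) x"
    using assms by (simp add: bp_def nextp_def field_simps power2_eq_square)
  with d have d2: "((\<lambda>x. poly p (1/x) * exp (- (1/x))) has_real_derivative bp (nextp p) x) (at x)"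
    by simp
  show ?thesis
    by (rule has_field_derivative_transform_within_open[OF d2, of "{0<..}"]) (use assms in \<open>auto simp: bp_def\<close>)
qed

lemma bp_deriv_neg:
  assumes "x < 0"
  shows "(bp p has_real_derivative bp (nextp p) x) (at x)"
proof -
  have "((\<lambda>x. 0) has_real_derivative 0) (at x)" by simp
  then have "(bp p has_real_derivative 0) (at x)"
    by (rule has_field_derivative_transform_within_open[of _ _ _ "{..<0}"]) (use assms in \<open>auto simp: bp_def\<close>)
  then show ?thesis using assms by (simp add: bp_def)
qed

lemma bp_deriv: "(bp p has_real_derivative bp (nextp p) x) (at x)"
proof (cases "x = 0")
  case True
  then show ?thesis using bp_deriv0[of p] by (simp add: bp_def)
next
  case False
  then show ?thesis using bp_deriv_pos bp_deriv_neg by (cases "x > 0") auto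
qed

definition beta :: "real \<Rightarrow> real" where "beta = bp 1"

lemma beta_nonpos: "x \<le> 0 \<Longrightarrow> beta x = 0" by (simp add: beta_def bp_def)
lemma beta_pos: "x > 0 \<Longrightarrow> beta x > 0" by (simp add: beta_def bp_def)



lemma real_fam_smooth:
  assumes R: "\<And>b. b \<in> R \<Longrightarrow> \<exists>b'\<in>R. \<forall>x. (b has_real_derivative b' x) (at x)"
    and b: "b \<in> R"
  shows "smooth_on S (\<lambda>z. complex_of_real (b (Re z)))"
proof -
  define G where "G = (\<lambda>(b,c). \<lambda>z. complex_of_real (b (Re z) * c)) ` (R \<times> (UNIV::real set))"
  have der: "((\<lambda>z. complex_of_real (b (Re z) * c)) has_derivative
      (\<lambda>u. complex_of_real (Re u * d * c))) (at z)"
    if "(b has_real_derivative d) (at (Re z))" for b d c z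
  proof -
    have "((\<lambda>x. Re x) has_derivative (\<lambda>x. Re x)) (at z)"
      by (rule bounded_linear.has_derivative[OF bounded_linear_Re has_derivative_ident])
    then have "((\<lambda>z. b (Re z)) has_derivative (\<lambda>u. Re u * d)) (at z)"
      by (rule DERIV_compose_FDERIV[where g=Re and x=z, OF that])
    then have "((\<lambda>z. b (Re z) * c) has_derivative (\<lambda>u. Re u * d * c)) (at z)"
      by (rule has_derivative_mult_left)
    then show ?thesis
      by (rule bounded_linear.has_derivative[OF bounded_linear_of_real])
  qed
  have "valid_fam S G"
    unfolding valid_fam_def
  proof (intro ballI conjI allI)
    fix g v assume "g \<in> G"
    then obtain b c where bR: "b \<in> R" and g: "g = (\<lambda>z. complex_of_real (b (Re z) * c))"
      unfolding G_def by auto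
    obtain b' where b'R: "b' \<in> R" and b': "\<And>x. (b has_real_derivative b' x) (at x)"
      using R[OF bR] by blast
    have gd: "(g has_derivative (\<lambda>u. complex_of_real (Re u * b' (Re z) * c))) (at z)" for z
      unfolding g by (rule der[OF b'])
    show "continuous_on S g"
      by (rule continuous_at_imp_continuous_on) (use gd has_derivative_continuous in blast)
    have hL: "(\<lambda>z. complex_of_real (b' (Re z) * (c * Re v))) \<in> G"
      unfolding G_def by (rule image_eqI[of _ _ "(b', c * Re v)"]) (use b'R in auto)
    have hD: "\<forall>x\<in>S. \<exists>D. (g has_derivative D) (at x) \<and> complex_of_real (b' (Re x) * (c * Re v)) = D v"
    proof
      fix x
      show "\<exists>D. (g has_derivative D) (at x) \<and> complex_of_real (b' (Re x) * (c * Re v)) = D v"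
        by (rule exI[of _ "\<lambda>u. complex_of_real (Re u * b' (Re x) * c)"]) (use gd[of x] in simp)
    qed
    show "\<exists>h\<in>G. \<forall>x\<in>S. \<exists>D. (g has_derivative D) (at x) \<and> h x = D v"
      by (rule bex_witness[OF hL hD])
  qed
  moreover have "(\<lambda>z. complex_of_real (b (Re z))) \<in> G"
    unfolding G_def by (rule image_eqI[of _ _ "(b, 1)"]) (use b in auto)
  ultimately show ?thesis by (intro smooth_onI)
qed

lemma smooth_beta_Re: "smooth_on S (\<lambda>z. complex_of_real (beta (Re z)))"
proof (rule real_fam_smooth[of "range bp"])
  fix b assume "b \<in> range bp"
  then obtain p where "b = bp p" by auto
  then show "\<exists>b'\<in>range bp. \<forall>x. (b has_real_derivative b' x) (at x)"
    using bp_deriv[of p] by blast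
qed (simp add: beta_def)

abbreviation rsm :: "complex set \<Rightarrow> (complex \<Rightarrow> real) \<Rightarrow> bool" where
  "rsm S a \<equiv> smooth_on S (\<lambda>x. complex_of_real (a x))"

lemma rsm_const: "rsm S (\<lambda>x. c)"
  by (rule smooth_const)

lemma rsm_Re: "rsm S (\<lambda>x. Re x)"
  using smooth_ReC[of S] unfolding ReC_def by simp

lemma rsm_Im: "rsm S (\<lambda>x. Im x)"
  using smooth_ImC[of S] unfolding ImC_def by simp

lemma rsm_add: assumes "rsm S a" "rsm S b" shows "rsm S (\<lambda>x. a x + b x)"
  using smooth_add[OF assms] by simp

lemma rsm_mult: assumes "rsm S a" "rsm S b" shows "rsm S (\<lambda>x. a x * b x)"
  using smooth_mult[OF assms] by simp

lemma rsm_diff: assumes "rsm S a" "rsm S b" shows "rsm S (\<lambda>x. a x - b x)"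
proof -
  have "rsm S (\<lambda>x. a x + (-1) * b x)"
    by (rule rsm_add[OF assms(1) rsm_mult[OF rsm_const assms(2)]])
  then show ?thesis by simp
qed

lemma rsm_beta: assumes "rsm S a" shows "rsm S (\<lambda>x. beta (a x))"
  using smooth_comp[OF assms smooth_beta_Re[of UNIV]] by simp

lemma rsm_inverse: assumes "rsm S a" "\<And>x. x \<in> S \<Longrightarrow> a x \<noteq> 0"
  shows "rsm S (\<lambda>x. inverse (a x))"
proof -
  have "inverse holomorphic_on (- {0} :: complex set)"
    by (intro holomorphic_intros) auto
  then have "smooth_on (- {0}) (inverse :: complex \<Rightarrow> complex)"
    by (rule smooth_holomorphic) auto
  moreover have "(\<lambda>x. complex_of_real (a x)) ` S \<subseteq> - {0}" using assms(2) by auto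
  ultimately have "smooth_on S (\<lambda>x. inverse (complex_of_real (a x)))"
    by (rule smooth_comp[OF assms(1)])
  then show ?thesis by (simp add: of_real_inverse)
qed

lemma rsm_sqrt: assumes "rsm S a" "\<And>x. x \<in> S \<Longrightarrow> a x > 0" "open S"
  shows "rsm S (\<lambda>x. sqrt (a x))"
proof -
  have "csqrt holomorphic_on - \<real>\<^sub>\<le>\<^sub>0" by (rule holomorphic_on_csqrt)
  then have "smooth_on (- \<real>\<^sub>\<le>\<^sub>0) csqrt"
    by (rule smooth_holomorphic) auto
  moreover have "(\<lambda>x. complex_of_real (a x)) ` S \<subseteq> - \<real>\<^sub>\<le>\<^sub>0"
    using assms(2) by (force simp: complex_nonpos_Reals_iff)
  ultimately have "smooth_on S (\<lambda>x. csqrt (complex_of_real (a x)))"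
    by (rule smooth_comp[OF assms(1)])
  then show ?thesis
    by (rule smooth_on_cong[OF _ assms(3)]) (metis csqrt_of_real assms(2) less_imp_le)
qed



lemma beta_nonneg: "beta x \<ge> 0"
  by (cases "x \<le> 0") (auto simp: beta_nonpos less_imp_le beta_pos)

lemma core_arith:
  fixes r \<rho> s A B :: real
  assumes r: "0 < r" "r < \<rho>" "\<rho> < 1" and s: "0 < s" "s < 1"
    and A: "A = beta (\<rho>^2 - s)" and B: "B = beta (s - r^2)"
  defines "t \<equiv> A * inverse (A + B)"
  defines "q \<equiv> 1 + t * (r^2 * inverse s - 1)"
  shows "A + B > 0" "q > 0" "s * q \<ge> r^2" "s * q < 1" "s \<ge> \<rho>^2 \<Longrightarrow> q = 1"
proof -
  have r2: "r^2 < \<rho>^2" "\<rho>^2 < 1" using r by (auto intro: power_strict_mono simp: power_less_one_iff)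
  have A0: "A \<ge> 0" "B \<ge> 0" using A B beta_nonneg by auto
  show AB: "A + B > 0"
  proof (cases "s < \<rho>^2")
    case True then have "A > 0" using A beta_pos by auto
    then show ?thesis using A0 by linarith
  next
    case False then have "B > 0" using B beta_pos r2 by auto
    then show ?thesis using A0 by linarith
  qed
  have t01: "0 \<le> t" "t \<le> 1" using AB A0 unfolding t_def by (auto simp: field_simps)
  have sq: "s * q = (1 - t) * s + t * r^2" unfolding q_def using s by (simp add: field_simps)
  show "s * q \<ge> r^2"
  proof (cases "s < r^2")
    case True
    then have "B = 0" using B beta_nonpos by auto
    moreover have "A > 0" using A beta_pos True r2 by auto
    ultimately have "t = 1" unfolding t_def by simp
    then show ?thesis using sq by simp
  next
    case False
    then have "(1 - t) * s \<ge> (1 - t) * r^2" using t01 by (intro mult_left_mono) auto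
    then show ?thesis using sq by (simp add: algebra_simps)
  qed
  moreover have "r^2 > 0" using r by simp
  ultimately have "s * q > 0" by linarith
  then show "q > 0" using s zero_less_mult_pos by blast
  have "(1 - t) * s \<le> (1 - t) * 1" using t01 s by (intro mult_left_mono) auto
  moreover have "t * r^2 \<le> t * 1" using t01 r2 by (intro mult_left_mono) auto
  moreover have "(1 - t) * s < (1 - t) * 1 \<or> t * r^2 < t * 1"
  proof (cases "t = 1")
    case True then show ?thesis using r2 by simp
  next
    case False then have "1 - t > 0" using t01 by simp
    then show ?thesis using s by simp
  qed
  ultimately show "s * q < 1" using sq by (smt (verit))
  assume "s \<ge> \<rho>^2"
  then have "A = 0" using A beta_nonpos by auto
  then show "q = 1" unfolding q_def t_def by simp
qed

lemma psi_exists: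
  fixes r \<rho> :: real
  assumes r: "0 < r" "r < \<rho>" "\<rho> < 1"
  shows "\<exists>\<Psi>. smooth_on (ball 0 1 - {0}) \<Psi> \<and>
     (\<forall>w \<in> ball 0 1 - {0}. \<Psi> w \<in> ball 0 1 - {0} \<and> norm (\<Psi> w) \<ge> r \<and> (norm w \<ge> \<rho> \<longrightarrow> \<Psi> w = w))"
proof -
  define T where "T = ball (0::complex) 1 - {0}"
  have oT: "open T" unfolding T_def by (simp add: open_Diff)
  define s where "s = (\<lambda>x::complex. Re x * Re x + Im x * Im x)"
  define A where "A = (\<lambda>x. beta (\<rho>^2 - s x))"
  define B where "B = (\<lambda>x. beta (s x - r^2))"
  define t where "t = (\<lambda>x. A x * inverse (A x + B x))"
  define q where "q = (\<lambda>x. 1 + t x * (r^2 * inverse (s x) - 1))"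
  define \<Psi> where "\<Psi> = (\<lambda>w. w * complex_of_real (sqrt (q w)))"
  have s_norm: "s x = (norm x)^2" for x unfolding s_def cmod_power2 by (simp only: power2_eq_square)
  have sT: "0 < s x \<and> s x < 1" if "x \<in> T" for x
    using that unfolding T_def s_norm by (auto simp: power_less_one_iff)
  have core: "A x + B x > 0 \<and> q x > 0 \<and> s x * q x \<ge> r^2 \<and> s x * q x < 1 \<and> (s x \<ge> \<rho>^2 \<longrightarrow> q x = 1)"
    if "x \<in> T" for x
    using core_arith[OF r conjunct1[OF sT[OF that]] conjunct2[OF sT[OF that]], of "A x" "B x"]
    unfolding q_def t_def A_def B_def by auto
  have rs: "rsm T s" unfolding s_def
    by (rule rsm_add[OF rsm_mult[OF rsm_Re rsm_Re] rsm_mult[OF rsm_Im rsm_Im]])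
  have rA: "rsm T A" unfolding A_def by (rule rsm_beta[OF rsm_diff[OF rsm_const rs]])
  have rB: "rsm T B" unfolding B_def by (rule rsm_beta[OF rsm_diff[OF rs rsm_const]])
  have rt: "rsm T t" unfolding t_def
    by (rule rsm_mult[OF rA rsm_inverse[OF rsm_add[OF rA rB]]]) (use core in force)
  have rinv: "rsm T (\<lambda>x. inverse (s x))"
    by (rule rsm_inverse[OF rs]) (use sT in force)
  have rq: "rsm T q" unfolding q_def
    by (rule rsm_add[OF rsm_const rsm_mult[OF rt rsm_diff[OF rsm_mult[OF rsm_const rinv] rsm_const]]])
  have rsq: "rsm T (\<lambda>x. sqrt (q x))"
    by (rule rsm_sqrt[OF rq _ oT]) (use core in blast)
  have sid: "smooth_on T (\<lambda>w. w)"
    by (rule smooth_holomorphic[OF _ oT]) simp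
  have smooth: "smooth_on T \<Psi>" unfolding \<Psi>_def
    by (rule smooth_mult[OF sid rsq])
  have props: "\<Psi> w \<in> T \<and> norm (\<Psi> w) \<ge> r \<and> (norm w \<ge> \<rho> \<longrightarrow> \<Psi> w = w)" if w: "w \<in> T" for w
  proof -
    from core[OF w] have c: "q w > 0" "s w * q w \<ge> r^2" "s w * q w < 1" "s w \<ge> \<rho>^2 \<Longrightarrow> q w = 1"
      by auto
    have n: "norm (\<Psi> w) = norm w * sqrt (q w)" unfolding \<Psi>_def using c(1) by (simp add: norm_mult)
    have n2: "(norm (\<Psi> w))^2 = s w * q w" unfolding n s_norm using c(1) by (simp add: power_mult_distrib)
    have "r^2 \<le> (norm (\<Psi> w))^2" using n2 c(2) by simp
    then have "r \<le> norm (\<Psi> w)" by (rule power2_le_imp_le) simp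
    moreover have "norm (\<Psi> w) < 1"
    proof -
      have "(norm (\<Psi> w))^2 < 1^2" using n2 c(3) by simp
      then show ?thesis by (rule power_less_imp_less_base) simp
    qed
    moreover have "\<Psi> w = w" if "norm w \<ge> \<rho>"
    proof -
      have "s w \<ge> \<rho>^2" unfolding s_norm using that r by (simp add: power_mono)
      then show ?thesis using c(4) unfolding \<Psi>_def by simp
    qed
    ultimately show ?thesis unfolding T_def using r by auto
  qed
  show ?thesis unfolding T_def[symmetric] using smooth props by blast
qed



theorem lemma3p1:
  fixes Sigma Omega K :: "complex set" and z0 :: complex
  assumes "closed Sigma"
    and "bounded Omega" and "open Omega" and "simply_connected Omega"
    and "z0 \<in> Omega" and "z0 \<notin> Sigma"
    and "compact K" and "K \<subseteq> Omega"
  shows "\<exists>\<kappa> :: complex \<Rightarrow> complex.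
           smooth_on (Omega - {z0}) \<kappa> \<and>
           \<kappa> ` (Omega - {z0}) \<subseteq> Omega - {z0} \<and>
           (\<exists>U. open U \<and> frontier Omega \<subseteq> U \<and> (\<forall>z \<in> (Omega \<inter> U) - {z0}. \<kappa> z = z)) \<and>
           \<kappa> ` (Sigma \<inter> Omega) \<inter> K = {}"
proof -
  note oO = assms(3)
  have ne: "Omega \<noteq> {}" using assms(5) by auto
  have nU: "Omega \<noteq> UNIV" using assms(2) not_bounded_UNIV by auto
  have "\<exists>f g. f holomorphic_on Omega \<and> g holomorphic_on ball 0 1 \<and>
           (\<forall>z \<in> Omega. f z \<in> ball 0 1 \<and> g(f z) = z) \<and>
           (\<forall>z \<in> ball 0 1. g z \<in> Omega \<and> f(g z) = z)"
    using Riemann_mapping_theorem[of Omega] assms(3,4) ne nU by blast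
  then obtain f g where fh: "f holomorphic_on Omega" and gh: "g holomorphic_on ball 0 1"
    and fg: "\<And>z. z \<in> Omega \<Longrightarrow> f z \<in> ball 0 1 \<and> g (f z) = z"
    and gf: "\<And>z. z \<in> ball 0 1 \<Longrightarrow> g z \<in> Omega \<and> f (g z) = z"
    by blast
  have a: "f z0 \<in> ball 0 1" using fg assms(5) by blast
  obtain M N where M0: "M (f z0) = 0" and Mh: "M holomorphic_on ball 0 1" and Mb: "M ` ball 0 1 \<subseteq> ball 0 1"
    and Nh: "N holomorphic_on ball 0 1" and Nb: "N ` ball 0 1 \<subseteq> ball 0 1"
    and MN: "\<And>z. z \<in> ball 0 1 \<Longrightarrow> M (N z) = z" and NM: "\<And>z. z \<in> ball 0 1 \<Longrightarrow> N (M z) = z"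
    by (rule ball_biholomorphism_exists[OF a]) blast
  define F where "F = (\<lambda>z. M (f z))"
  define G where "G = (\<lambda>w. g (N w))"
  have FH: "F holomorphic_on Omega"
  proof -
    have "(M \<circ> f) holomorphic_on Omega"
      by (rule holomorphic_on_compose_gen[OF fh Mh]) (use fg in auto)
    then show ?thesis by (simp add: F_def o_def)
  qed
  have GH: "G holomorphic_on ball 0 1"
  proof -
    have "(g \<circ> N) holomorphic_on ball 0 1"
      by (rule holomorphic_on_compose_gen[OF Nh gh Nb])
    then show ?thesis by (simp add: G_def o_def)
  qed
  have Fin: "F z \<in> ball 0 1" if "z \<in> Omega" for z
    using fg[OF that] Mb unfolding F_def by blast
  have GF: "G (F z) = z" if "z \<in> Omega" for z
    using fg[OF that] NM unfolding F_def G_def by auto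
  have Gin: "G w \<in> Omega" if "w \<in> ball 0 1" for w
  proof -
    have "N w \<in> ball 0 1" using Nb that by blast
    then show ?thesis using gf unfolding G_def by blast
  qed
  have FG: "F (G w) = w" if "w \<in> ball 0 1" for w
  proof -
    have "N w \<in> ball 0 1" using Nb that by blast
    then show ?thesis using gf MN that unfolding F_def G_def by auto
  qed
  have F0: "F z0 = 0" unfolding F_def using M0 .
  have contF: "continuous_on Omega F" using FH by (rule holomorphic_on_imp_continuous_on)
  have contG: "continuous_on (ball 0 1) G" using GH by (rule holomorphic_on_imp_continuous_on)
  obtain m where m: "m < 1" "\<And>k. k \<in> K \<Longrightarrow> norm (F k) \<le> m"
  proof (cases "K = {}")
    case True
    then show ?thesis using that[of 0] by auto
  next
    case False
    have "continuous_on K (\<lambda>k. norm (F k))"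
      by (rule continuous_on_norm[OF continuous_on_subset[OF contF assms(8)]])
    then obtain k0 where k0: "k0 \<in> K" "\<And>k. k \<in> K \<Longrightarrow> norm (F k) \<le> norm (F k0)"
      using continuous_attains_sup[OF assms(7) False] by blast
    have "norm (F k0) < 1" using Fin[of k0] k0(1) assms(8) by auto
    then show ?thesis using that[of "norm (F k0)"] k0 by blast
  qed
  define r where "r = (max m 0 + 1) / 2"
  define \<rho> where "\<rho> = (r + 1) / 2"
  have r: "0 < r" "r < \<rho>" "\<rho> < 1" using m(1) unfolding r_def \<rho>_def by auto
  have Kr: "norm (F k) < r" if "k \<in> K" for k
    using m(2)[OF that] m(1) unfolding r_def by auto
  obtain \<Psi> where \<Psi>s: "smooth_on (ball 0 1 - {0}) \<Psi>"
    and \<Psi>p: "\<And>w. w \<in> ball 0 1 - {0} \<Longrightarrow> \<Psi> w \<in> ball 0 1 - {0} \<and> norm (\<Psi> w) \<ge> r \<and> (norm w \<ge> \<rho> \<longrightarrow> \<Psi> w = w)"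
    using psi_exists[OF r] by blast
  have Fpunct: "F z \<in> ball 0 1 - {0}" if "z \<in> Omega - {z0}" for z
  proof -
    have "F z \<noteq> 0"
    proof
      assume "F z = 0"
      then have "z = G (F z0)" using GF[of z] that F0 by auto
      then show False using GF[OF assms(5)] that by auto
    qed
    then show ?thesis using Fin that by auto
  qed
  define \<kappa> where "\<kappa> = (\<lambda>z. G (\<Psi> (F z)))"
  have sF: "smooth_on (Omega - {z0}) F"
    by (rule smooth_on_subset[OF smooth_holomorphic[OF FH oO]]) auto
  have s1: "smooth_on (Omega - {z0}) (\<lambda>z. \<Psi> (F z))"
    by (rule smooth_comp[OF sF \<Psi>s]) (use Fpunct in auto)
  have sG: "smooth_on (ball 0 1) G"
    by (rule smooth_holomorphic[OF GH]) simp
  have sk: "smooth_on (Omega - {z0}) \<kappa>" unfolding \<kappa>_def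
    by (rule smooth_comp[OF s1 sG]) (use Fpunct \<Psi>p in blast)
  have img: "\<kappa> ` (Omega - {z0}) \<subseteq> Omega - {z0}"
  proof
    fix y assume "y \<in> \<kappa> ` (Omega - {z0})"
    then obtain z where z: "z \<in> Omega - {z0}" and y: "y = G (\<Psi> (F z))" unfolding \<kappa>_def by auto
    have w: "\<Psi> (F z) \<in> ball 0 1 - {0}" using \<Psi>p[OF Fpunct[OF z]] by blast
    have "y \<in> Omega" using Gin w y by auto
    moreover have "y \<noteq> z0"
    proof
      assume "y = z0"
      then have "F y = 0" using F0 by simp
      moreover have "F y = \<Psi> (F z)" using FG w y by auto
      ultimately show False using w by auto
    qed
    ultimately show "y \<in> Omega - {z0}" by auto
  qed
  define U where "U = - (G ` cball 0 \<rho>)"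
  have cb: "cball (0::complex) \<rho> \<subseteq> ball 0 1" using r by auto
  have cU: "compact (G ` cball 0 \<rho>)"
    by (rule compact_continuous_image[OF continuous_on_subset[OF contG cb] compact_cball])
  have oU: "open U" unfolding U_def using cU by (simp add: compact_imp_closed open_Compl)
  have fU: "frontier Omega \<subseteq> U"
  proof
    fix y assume y: "y \<in> frontier Omega"
    have "y \<notin> Omega" using y frontier_disjoint_eq[of Omega] oO by auto
    moreover have "G ` cball 0 \<rho> \<subseteq> Omega" using Gin cb by auto
    ultimately show "y \<in> U" unfolding U_def by auto
  qed
  have idU: "\<forall>z \<in> (Omega \<inter> U) - {z0}. \<kappa> z = z"
  proof
    fix z assume z: "z \<in> (Omega \<inter> U) - {z0}"
    have "norm (F z) \<ge> \<rho>"
    proof (rule ccontr)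
      assume "\<not> \<rho> \<le> norm (F z)"
      then have "F z \<in> cball 0 \<rho>" by auto
      then have "G (F z) \<in> G ` cball 0 \<rho>" by blast
      then show False using z GF[of z] unfolding U_def by auto
    qed
    then have "\<Psi> (F z) = F z" using \<Psi>p[OF Fpunct] z by auto
    then show "\<kappa> z = z" unfolding \<kappa>_def using GF z by auto
  qed
  have disj: "\<kappa> ` (Sigma \<inter> Omega) \<inter> K = {}"
  proof (rule ccontr)
    assume "\<kappa> ` (Sigma \<inter> Omega) \<inter> K \<noteq> {}"
    then obtain z where z: "z \<in> Sigma \<inter> Omega" and zK: "\<kappa> z \<in> K" by auto
    have z': "z \<in> Omega - {z0}" using z assms(6) by auto
    have w: "\<Psi> (F z) \<in> ball 0 1 - {0}" "norm (\<Psi> (F z)) \<ge> r" using \<Psi>p[OF Fpunct[OF z']] by auto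
    have "F (\<kappa> z) = \<Psi> (F z)" unfolding \<kappa>_def using FG w(1) by auto
    then show False using Kr[OF zK] w(2) by auto
  qed
  show ?thesis
    using sk img oU fU idU disj by blast
qed

end
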